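(* Let $\varphi$ be a Lagrangian flow associated with $v\in L^2([0,1],H^1_0([0,1]))$, and let $\psi$ be a generalized inverse of $\varphi$ in the space variable, e.g. $\psi(t,y)=\inf\{x\in[0,1]:\varphi(t,x)\ge y\}$. Then the distributional derivative $\partial_{tx}\varphi$ on $D=[0,1]^2$ is a Radon measure, and for every $f\in C^2(D)$, $$\int_D \partial_x v(t,y)\, f(t,\psi(t,y))\,dy\,dt=\langle\partial_{tx}\varphi,f\rangle .$$
   Context: Definition (Lagrangian flow): let $v\in L^1([0,1],C([0,1]))$. A map $\varphi:[0,1]\times[0,1]\to[0,1]$, $(t,x)\mapsto\varphi(t,x)$, is a Lagrangian flow associated with $v$ if (i) $x\mapsto\varphi(t,x)$ is nondecreasing for every $t$, and (ii) for every $x$ the map $t\mapsto\varphi(t,x)$ is absolutely continuous and $\varphi(t,x)-\varphi(s,x)=\int_s^t v(r,\varphi(r,x))\,dr$ for all $0\le s<t\le 1$. *)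

theory Defs
  imports "HOL-Analysis.Analysis"
begin

abbreviation unit_square :: "(real \<times> real) set" where
  "unit_square \<equiv> {0..1} \<times> {0..1}"

definition abs_cont_on :: "real set \<Rightarrow> (real \<Rightarrow> real) \<Rightarrow> bool" where
  "abs_cont_on I g \<longleftrightarrow>
     (\<forall>e>0. \<exists>d>0. \<forall>(n::nat) (a::nat \<Rightarrow> real) b.
        (\<forall>i<n. a i \<in> I \<and> b i \<in> I \<and> a i \<le> b i) \<and>
        (\<forall>i. Suc i < n \<longrightarrow> b i \<le> a (Suc i)) \<and>
        (\<Sum>i<n. b i - a i) < d
        \<longrightarrow> (\<Sum>i<n. \<bar>g (b i) - g (a i)\<bar>) < e)"

text \<open>v (a function of (t,x)) belongs to L^2([0,1],H^1_0([0,1])) with spatial weak derivative w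
  (i.e. w = \<partial>_x v).  Concretely: v and w are (jointly Borel) measurable on [0,1]^2,
  w is square integrable on [0,1]^2, and for a.e. t in [0,1] the function v(t,.) is the
  primitive of w(t,.) vanishing at 0 and also vanishes at 1.
  (The full H^1 norm is controlled by the L^2 norm of w via Poincare.)\<close>
definition L2_H10 :: "(real \<Rightarrow> real \<Rightarrow> real) \<Rightarrow> (real \<Rightarrow> real \<Rightarrow> real) \<Rightarrow> bool" where
  "L2_H10 v w \<longleftrightarrow>
     (\<lambda>z. v (fst z) (snd z)) \<in> borel_measurable (restrict_space borel unit_square) \<and>
     (\<lambda>z. w (fst z) (snd z)) \<in> borel_measurable (restrict_space borel unit_square) \<and>
     set_integrable lborel unit_square (\<lambda>z. (w (fst z) (snd z))\<^sup>2) \<and>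
     (AE t in lborel. t \<in> {0..1} \<longrightarrow>
        set_integrable lborel {0..1} (w t) \<and>
        (\<forall>x\<in>{0..1}. v t x = (LINT s:{0..x}|lborel. w t s)) \<and>
        v t 1 = 0)"

definition lagrangian_flow :: "(real \<Rightarrow> real \<Rightarrow> real) \<Rightarrow> (real \<Rightarrow> real \<Rightarrow> real) \<Rightarrow> bool" where
  "lagrangian_flow v \<phi> \<longleftrightarrow>
     (\<forall>t\<in>{0..1}. \<forall>x\<in>{0..1}. \<phi> t x \<in> {0..1}) \<and>
     (\<forall>t\<in>{0..1}. mono_on {0..1} (\<phi> t)) \<and>
     (\<forall>x\<in>{0..1}.
        abs_cont_on {0..1} (\<lambda>t. \<phi> t x) \<and>
        (\<forall>s t. 0 \<le> s \<and> s < t \<and> t \<le> 1 \<longrightarrow>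
           set_integrable lborel {s..t} (\<lambda>r. v r (\<phi> r x)) \<and>
           \<phi> t x - \<phi> s x = (LINT r:{s..t}|lborel. v r (\<phi> r x))))"

definition gen_inv :: "(real \<Rightarrow> real \<Rightarrow> real) \<Rightarrow> real \<Rightarrow> real \<Rightarrow> real" where
  "gen_inv \<phi> t y =
     (if {x\<in>{0..1}. y \<le> \<phi> t x} = {} then 1 else Inf {x\<in>{0..1}. y \<le> \<phi> t x})"

definition pt :: "(real \<times> real \<Rightarrow> real) \<Rightarrow> real \<times> real \<Rightarrow> real" where
  "pt f z = deriv (\<lambda>s. f (s, snd z)) (fst z)"

definition px :: "(real \<times> real \<Rightarrow> real) \<Rightarrow> real \<times> real \<Rightarrow> real" where
  "px f z = deriv (\<lambda>y. f (fst z, y)) (snd z)"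

fun Ck_on :: "nat \<Rightarrow> (real \<times> real) set \<Rightarrow> (real \<times> real \<Rightarrow> real) \<Rightarrow> bool" where
  "Ck_on 0 U f = continuous_on U f"
| "Ck_on (Suc k) U f =
     (continuous_on U f \<and>
      (\<exists>ft fx. (\<forall>z\<in>U. ((\<lambda>s. f (s, snd z)) has_real_derivative ft z) (at (fst z)) \<and>
                       ((\<lambda>y. f (fst z, y)) has_real_derivative fx z) (at (snd z))) \<and>
               Ck_on k U ft \<and> Ck_on k U fx))"

definition C2_square :: "(real \<times> real \<Rightarrow> real) \<Rightarrow> bool" where
  "C2_square f \<longleftrightarrow> (\<exists>U. open U \<and> unit_square \<subseteq> U \<and> Ck_on 2 U f)"

definition test_fun :: "(real \<times> real \<Rightarrow> real) \<Rightarrow> bool" where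
  "test_fun f \<longleftrightarrow> (\<forall>k. Ck_on k UNIV f) \<and>
     (\<exists>K. compact K \<and> K \<subseteq> {0<..<1} \<times> {0<..<1} \<and> (\<forall>z. z \<notin> K \<longrightarrow> f z = 0))"

text \<open>A finite (nonnegative) Borel measure on R^2 concentrated on D.  Finite signed Radon
  measures on D are represented as differences M1 - M2 of two such measures.\<close>
definition finite_meas_on_square :: "(real \<times> real) measure \<Rightarrow> bool" where
  "finite_meas_on_square M \<longleftrightarrow>
     sets M = sets borel \<and> finite_measure M \<and> emeasure M (UNIV - unit_square) = 0"

end

theory Submission
  imports Defs
begin

lemma abs_cont_imp_cont:
  assumes "abs_cont_on {0..1} g"
  shows "continuous_on {0..1} g"
  unfolding continuous_on_iff
proof (intro ballI allI impI)
  fix x e :: real assume x: "x \<in> {0..1}" and e: "0 < e"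
  obtain d where d: "d > 0" and H: "\<And>(n::nat) a b.
        (\<forall>i<n. a i \<in> {0..1} \<and> b i \<in> {0..1} \<and> a i \<le> b i) \<and>
        (\<forall>i. Suc i < n \<longrightarrow> b i \<le> a (Suc i)) \<and>
        (\<Sum>i<n. b i - a i) < d
        \<Longrightarrow> (\<Sum>i<n. \<bar>g (b i) - g (a i)\<bar>) < e"
    using assms e unfolding abs_cont_on_def by (elim allE[of _ e]) auto
  have key: "\<bar>g q - g p\<bar> < e" if "p \<in> {0..1}" "q \<in> {0..1}" "p \<le> q" "q - p < d" for p q
    using H[of 1 "\<lambda>_. p" "\<lambda>_. q"] that by simp
  show "\<exists>d>0. \<forall>x'\<in>{0..1}. dist x' x < d \<longrightarrow> dist (g x') (g x) < e"
  proof (intro exI[of _ d] conjI ballI impI d)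
    fix x' assume x': "x' \<in> {0..1}" and dd: "dist x' x < d"
    show "dist (g x') (g x) < e"
    proof (cases "x' \<le> x")
      case True then show ?thesis using key[of x' x] x x' dd by (simp add: dist_real_def abs_minus_commute)
    next
      case False then show ?thesis using key[of x x'] x x' dd by (simp add: dist_real_def)
    qed
  qed
qed

lemma mono_meas_ind:
  assumes "mono_on {0..1} (g::real\<Rightarrow>real)"
  shows "(\<lambda>x. indicator {0..1} x * g x) \<in> borel_measurable borel"
  using borel_measurable_mono_on_fnc[OF assms] borel_measurable_restrict_space_iff[of "{0..1::real}" borel g]
  by simp

lemma floor_approx:
  fixes t :: real assumes t: "t \<in> {0..1}"
  shows "(\<lambda>n. real (nat \<lfloor>real (Suc n) * t\<rfloor>) / real (Suc n)) \<longlonglongrightarrow> t"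
proof (rule tendsto_sandwich[of "\<lambda>n. t - inverse (real (Suc n))" _ _ "\<lambda>n. t"])
  show "\<forall>\<^sub>F n in sequentially. t - inverse (real (Suc n)) \<le> real (nat \<lfloor>real (Suc n) * t\<rfloor>) / real (Suc n)"
  proof (intro always_eventually allI)
    fix n
    have "real (Suc n) * t - 1 \<le> real (nat \<lfloor>real (Suc n) * t\<rfloor>)"
    proof -
      have "0 \<le> real (Suc n) * t" using t by simp
      then have "real (nat \<lfloor>real (Suc n) * t\<rfloor>) = of_int \<lfloor>real (Suc n) * t\<rfloor>" by simp
      moreover have "real (Suc n) * t < of_int \<lfloor>real (Suc n) * t\<rfloor> + 1" using floor_correct[of "real (Suc n) * t"] by simp
      ultimately show ?thesis by linarith
    qed
    then have "(real (Suc n) * t - 1) / real (Suc n) \<le> real (nat \<lfloor>real (Suc n) * t\<rfloor>) / real (Suc n)"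
      by (intro divide_right_mono) auto
    moreover have "(real (Suc n) * t - 1) / real (Suc n) = t - inverse (real (Suc n))"
      by (simp add: field_simps)
    ultimately show "t - inverse (real (Suc n)) \<le> real (nat \<lfloor>real (Suc n) * t\<rfloor>) / real (Suc n)"
      by simp
  qed
  show "\<forall>\<^sub>F n in sequentially. real (nat \<lfloor>real (Suc n) * t\<rfloor>) / real (Suc n) \<le> t"
  proof (intro always_eventually allI)
    fix n
    have "real (nat \<lfloor>real (Suc n) * t\<rfloor>) \<le> real (Suc n) * t"
      using t by (simp add: of_nat_nat)
    then show "real (nat \<lfloor>real (Suc n) * t\<rfloor>) / real (Suc n) \<le> t"
      by (simp add: field_simps)
  qed
  show "(\<lambda>n. t - inverse (real (Suc n))) \<longlonglongrightarrow> t"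
    using tendsto_diff[OF tendsto_const LIMSEQ_inverse_real_of_nat, of t] by simp
qed simp

lemma phi_meas:
  fixes \<phi> :: "real \<Rightarrow> real \<Rightarrow> real"
  assumes mono: "\<And>t. t\<in>{0..1} \<Longrightarrow> mono_on {0..1} (\<phi> t)"
    and cont: "\<And>x. x\<in>{0..1} \<Longrightarrow> continuous_on {0..1} (\<lambda>t. \<phi> t x)"
  shows "(\<lambda>z. indicator unit_square z * \<phi> (fst z) (snd z)) \<in> borel_measurable borel"
proof -
  define N where "N n = real (Suc n)" for n :: nat
  define G where "G c x = indicator {0..1} x * \<phi> c x" for c x
  define u where "u n z = (\<Sum>k\<le>Suc n. indicator {real k / N n ..< real (Suc k) / N n} (fst z) *
       (indicator {0..1} (fst z) * G (real k / N n) (snd z)))" for n z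
  have g: "G c \<in> borel_measurable borel" if "c \<in> {0..1}" for c
    using mono_meas_ind[OF mono[OF that]] by (simp add: G_def[abs_def])
  have um: "u n \<in> borel_measurable borel" for n
    unfolding u_def
  proof (intro borel_measurable_sum)
    fix k assume "k \<in> {..Suc n}"
    then have "real k / N n \<in> {0..1}" by (auto simp: N_def)
    note [measurable] = g[OF this]
    show "(\<lambda>z. indicator {real k / N n ..< real (Suc k) / N n} (fst z) *
       (indicator {0..1} (fst z) * G (real k / N n) (snd z))) \<in> borel_measurable borel"
      unfolding borel_prod[symmetric] by measurable
  qed
  show ?thesis
  proof (rule borel_measurable_LIMSEQ_real[OF _ um])
    fix z :: "real \<times> real"
    show "(\<lambda>n. u n z) \<longlonglongrightarrow> indicator unit_square z * \<phi> (fst z) (snd z)"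
    proof (cases "z \<in> unit_square")
      case False
      then have "fst z \<notin> {0..1} \<or> snd z \<notin> {0..1}" by (cases z) auto
      then have "u n z = 0" for n unfolding u_def G_def by auto
      then show ?thesis using False by simp
    next
      case True
      define t where "t = fst z" define x where "x = snd z"
      have t: "t \<in> {0..1}" and x: "x \<in> {0..1}" using True by (auto simp: t_def x_def mem_Times_iff)
      define m where "m n = nat \<lfloor>N n * t\<rfloor>" for n
      have ind: "indicator {real k / N n ..< real (Suc k) / N n} t = (if k = m n then 1 else (0::real))" for k n
      proof -
        have Np: "N n > 0" by (simp add: N_def)
        have "t \<in> {real k / N n ..< real (Suc k) / N n} \<longleftrightarrow> real k \<le> N n * t \<and> N n * t < real k + 1"
          using Np by (auto simp: field_simps)
        also have "\<dots> \<longleftrightarrow> k = m n"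
        proof
          assume a: "real k \<le> N n * t \<and> N n * t < real k + 1"
          have "\<lfloor>N n * t\<rfloor> = int k" by (rule floor_unique) (use a in auto)
          then show "k = m n" by (simp add: m_def)
        next
          assume "k = m n"
          moreover have "0 \<le> N n * t" using t Np by simp
          ultimately show "real k \<le> N n * t \<and> N n * t < real k + 1"
            unfolding m_def using floor_correct[of "N n * t"] by (simp add: of_nat_nat)
        qed
        finally show ?thesis by (simp add: indicator_def)
      qed
      have mle: "m n \<le> Suc n" for n
      proof -
        have "N n * t \<le> N n" using t by (simp add: N_def)
        then have "\<lfloor>N n * t\<rfloor> \<le> \<lfloor>N n\<rfloor>" by (rule floor_mono)
        then have "\<lfloor>N n * t\<rfloor> \<le> int (Suc n)" by (simp add: N_def)
        then show ?thesis by (simp add: m_def)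
      qed
      have ueq: "u n z = \<phi> (real (m n) / N n) x" for n
      proof -
        have "u n z = (\<Sum>k\<le>Suc n. if k = m n then \<phi> (real k / N n) x else 0)"
          unfolding u_def t_def[symmetric] x_def[symmetric] using t x by (intro sum.cong refl) (simp only: ind, auto simp: G_def)
        also have "\<dots> = \<phi> (real (m n) / N n) x" using mle[of n] by (simp add: sum.delta)
        finally show ?thesis .
      qed
      have lim: "(\<lambda>n. real (m n) / N n) \<longlonglongrightarrow> t"
        using floor_approx[OF t] by (simp add: m_def N_def)
      have inI: "real (m n) / N n \<in> {0..1}" for n using mle[of n] by (auto simp: N_def)
      have "(\<lambda>n. \<phi> (real (m n) / N n) x) \<longlonglongrightarrow> \<phi> t x"
        by (rule continuous_on_tendsto_compose[OF cont[OF x] lim t]) (use inI in \<open>auto intro: always_eventually\<close>)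
      then show ?thesis using True by (simp add: ueq t_def x_def)
    qed
  qed
qed

lemma gen_inv_range: "gen_inv \<phi> t y \<in> {0..1}"
proof (cases "{x\<in>{0..1}. y \<le> \<phi> t x} = {}")
  case True then show ?thesis by (simp add: gen_inv_def)
next
  case False
  then obtain s where s: "s \<in> {x\<in>{0..1}. y \<le> \<phi> t x}" by blast
  have bdd: "bdd_below {x\<in>{0..1}. y \<le> \<phi> t x}" by (rule bdd_belowI[of _ 0]) auto
  have "Inf {x\<in>{0..1}. y \<le> \<phi> t x} \<ge> 0" using False by (intro cInf_greatest) auto
  moreover have "Inf {x\<in>{0..1}. y \<le> \<phi> t x} \<le> s" using bdd s by (rule cInf_lower[rotated])
  ultimately show ?thesis using False s by (simp add: gen_inv_def)
qed

lemma gen_inv_le: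
  assumes mono: "mono_on {0..1} (\<phi> t)" and c: "0 \<le> c" "c < 1"
  shows "gen_inv \<phi> t y \<le> c \<longleftrightarrow> (\<forall>n. y \<le> \<phi> t (min 1 (c + inverse (real (Suc n)))))"
proof -
  define S where "S = {x\<in>{0..1}. y \<le> \<phi> t x}"
  have bdd: "bdd_below S" unfolding S_def by (rule bdd_belowI[of _ 0]) auto
  have inI: "min 1 (c + inverse (real (Suc n))) \<in> {0..1}" for n using c by auto
  show ?thesis
  proof
    assume le: "gen_inv \<phi> t y \<le> c"
    have ne: "S \<noteq> {}"
    proof
      assume "S = {}" then have "gen_inv \<phi> t y = 1" unfolding gen_inv_def S_def[symmetric] by simp
      then show False using le c by simp
    qed
    show "\<forall>n. y \<le> \<phi> t (min 1 (c + inverse (real (Suc n))))"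
    proof
      fix n
      have "Inf S \<le> c" using le ne unfolding gen_inv_def S_def[symmetric] by simp
      moreover have "0 < inverse (real (Suc n))" by simp
      ultimately have "Inf S < c + inverse (real (Suc n))" by linarith
      then obtain s where s: "s \<in> S" "s < c + inverse (real (Suc n))"
        using cInf_less_iff[OF ne bdd] by blast
      have "s \<le> min 1 (c + inverse (real (Suc n)))" using s by (auto simp: S_def)
      then have "\<phi> t s \<le> \<phi> t (min 1 (c + inverse (real (Suc n))))"
        using mono s inI[of n] by (auto simp: S_def intro: mono_onD)
      then show "y \<le> \<phi> t (min 1 (c + inverse (real (Suc n))))" using s by (auto simp: S_def)
    qed
  next
    assume H: "\<forall>n. y \<le> \<phi> t (min 1 (c + inverse (real (Suc n))))"
    then have inS: "min 1 (c + inverse (real (Suc n))) \<in> S" for n using inI[of n] by (auto simp: S_def)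
    then have ne: "S \<noteq> {}" by blast
    have "Inf S \<le> c"
    proof (rule ccontr)
      assume "\<not> Inf S \<le> c"
      then obtain n where n: "inverse (real (Suc n)) < Inf S - c"
        using reals_Archimedean[of "Inf S - c"] by auto
      have "Inf S \<le> min 1 (c + inverse (real (Suc n)))" by (rule cInf_lower[OF inS bdd])
      then show False using n by linarith
    qed
    then show "gen_inv \<phi> t y \<le> c" using ne unfolding gen_inv_def S_def[symmetric] by simp
  qed
qed

lemma D_sets[measurable]: "unit_square \<in> sets borel"
  by (intro borel_closed closed_Times closed_atLeastAtMost)

lemma psi_meas:
  fixes \<phi> :: "real \<Rightarrow> real \<Rightarrow> real"
  assumes mono: "\<And>t. t\<in>{0..1} \<Longrightarrow> mono_on {0..1} (\<phi> t)"
    and cont: "\<And>x. x\<in>{0..1} \<Longrightarrow> continuous_on {0..1} (\<lambda>t. \<phi> t x)"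
  shows "(\<lambda>z. gen_inv \<phi> (fst z) (snd z)) \<in> borel_measurable (restrict_space borel unit_square)"
proof (subst borel_measurable_iff_le, intro allI)
  fix c :: real
  have sp: "space (restrict_space borel unit_square) = unit_square" by (simp add: space_restrict_space)
  have sets: "A \<in> sets (restrict_space borel unit_square) \<longleftrightarrow> A \<subseteq> unit_square \<and> A \<in> sets borel" for A
    by (rule sets_restrict_space_iff) simp
  define X where "X = {w \<in> unit_square. gen_inv \<phi> (fst w) (snd w) \<le> c}"
  have "X \<in> sets borel"
  proof (cases "c < 0")
    case True
    then have "X = {}" using gen_inv_range[of \<phi>] unfolding X_def by (auto simp: not_le) (meson atLeastAtMost_iff less_le_trans not_less)
    then show ?thesis by simp
  next
    case c0: False
    show ?thesis
    proof (cases "c \<ge> 1")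
      case True
      then have "X = unit_square" using gen_inv_range[of \<phi>] unfolding X_def by (auto intro: order_trans)
      then show ?thesis by simp
    next
      case False
      define xn where "xn n = min 1 (c + inverse (real (Suc n)))" for n
      define H where "H n t = \<phi> (max 0 (min 1 t)) (xn n)" for n t
      have xn: "xn n \<in> {0..1}" for n using c0 by (auto simp: xn_def)
      have Hc: "continuous_on UNIV (H n)" for n
      proof -
        have "continuous_on UNIV (\<lambda>t::real. max 0 (min 1 t))" by (intro continuous_intros)
        moreover have "(\<lambda>t::real. max 0 (min 1 t)) ` UNIV \<subseteq> {0..1}" by auto
        ultimately show ?thesis unfolding H_def
          using continuous_on_compose2[OF cont[OF xn[of n]]] by blast
      qed
      have Hm[measurable]: "H n \<in> borel_measurable borel" for n by (rule borel_measurable_continuous_onI[OF Hc])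
      have "X = unit_square \<inter> (\<Inter>n. {z. snd z \<le> H n (fst z)})"
      proof -
        have key: "gen_inv \<phi> t y \<le> c \<longleftrightarrow> (\<forall>n. y \<le> \<phi> t (xn n))" if "t \<in> {0..1}" for t y
          using gen_inv_le[of \<phi> t c y] mono[OF that] c0 False by (simp add: xn_def)
        have H: "H n t = \<phi> t (xn n)" if "t \<in> {0..1}" for t n using that by (simp add: H_def)
        show ?thesis unfolding X_def by (auto simp: mem_Times_iff key H)
      qed
      moreover have "{z::real\<times>real. snd z \<le> H n (fst z)} \<in> sets borel" for n
      proof -
        have "{z\<in>space (borel \<Otimes>\<^sub>M borel). snd z \<le> H n (fst z)} \<in> sets (borel \<Otimes>\<^sub>M (borel::real measure))"
          by measurable
        then show ?thesis by (simp only: borel_prod space_borel UNIV_I simp_thms)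
      qed
      ultimately show ?thesis by auto
    qed
  qed
  then show "{w \<in> space (restrict_space borel unit_square). gen_inv \<phi> (fst w) (snd w) \<le> c}
      \<in> sets (restrict_space borel unit_square)"
    unfolding sp sets X_def[symmetric] by (auto simp: X_def)
qed

lemma FTC01:
  fixes h h' :: "real \<Rightarrow> real"
  assumes deriv: "\<And>x. x \<in> {0..1} \<Longrightarrow> (h has_real_derivative h' x) (at x)"
    and cont: "continuous_on {0..1} h'" and q: "q \<in> {0..1}"
  shows "(LINT x:{q..1}|lborel. h' x) = h 1 - h q" "(LINT x:{q<..1}|lborel. h' x) = h 1 - h q"
proof -
  have mm: "min q 1 = q" "max q 1 = 1" using q by auto
  have A: "interval_lebesgue_integral lborel (ereal q) (ereal 1) h' = h 1 - h q"
  proof (rule interval_integral_FTC_finite)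
    show "continuous_on {min q 1..max q 1} h'" unfolding mm by (rule continuous_on_subset[OF cont]) (use q in auto)
    fix x assume "min q 1 \<le> x" "x \<le> max q 1"
    then have x01: "x \<in> {0..1}" using q by auto
    show "(h has_vector_derivative h' x) (at x within {min q 1..max q 1})"
      using deriv[OF x01] unfolding has_real_derivative_iff_has_vector_derivative by (rule has_vector_derivative_at_within)
  qed
  have q1: "q \<le> 1" using q by simp
  show "(LINT x:{q..1}|lborel. h' x) = h 1 - h q" using A interval_integral_Icc[OF q1, of h'] by simp
  show "(LINT x:{q<..1}|lborel. h' x) = h 1 - h q" using A interval_integral_Ioc[of q 1 h'] q1 by simp
qed

lemma level_set_FTC:
  fixes h h' :: "real \<Rightarrow> real"
  assumes mono: "mono_on {0..1} (\<phi> t)"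
    and deriv: "\<And>x. x \<in> {0..1} \<Longrightarrow> (h has_real_derivative h' x) (at x)"
    and cont: "continuous_on {0..1} h'"
  shows "(LINT x:{x\<in>{0..1}. y \<le> \<phi> t x}|lborel. h' x) = h 1 - h (gen_inv \<phi> t y)"
proof -
  define S where "S = {x\<in>{0..1}. y \<le> \<phi> t x}"
  show ?thesis
  proof (cases "S = {}")
    case True
    then show ?thesis unfolding S_def[symmetric] gen_inv_def by (simp add: set_lebesgue_integral_def)
  next
    case False
    define q where "q = Inf S"
    have gq: "gen_inv \<phi> t y = q" using False unfolding gen_inv_def S_def[symmetric] q_def by simp
    have q01: "q \<in> {0..1}" using gen_inv_range[of \<phi> t y] gq by simp
    have bdd: "bdd_below S" unfolding S_def by (rule bdd_belowI[of _ 0]) auto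
    have sub1: "x \<in> {q..1}" if "x \<in> S" for x
    proof -
      have "q \<le> x" unfolding q_def by (rule cInf_lower[OF that bdd])
      moreover have "x \<le> 1" using that by (simp add: S_def)
      ultimately show ?thesis by simp
    qed
    have sub2: "x \<in> S" if "q < x" "x \<le> 1" for x
    proof -
      have "\<exists>s\<in>S. s < x" using cInf_less_iff[OF False bdd] that(1) by (auto simp: q_def)
      then obtain s where s: "s \<in> S" "s < x" by blast
      have s01: "s \<in> {0..1}" and ys: "y \<le> \<phi> t s" using s(1) by (simp_all add: S_def)
      have x01: "x \<in> {0..1}" using that q01 by simp
      have "\<phi> t s \<le> \<phi> t x" by (rule mono_onD[OF mono s01 x01]) (use s(2) in simp)
      then show ?thesis using ys x01 by (simp add: S_def)
    qed
    note FTC = FTC01[OF deriv cont q01]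
    show ?thesis
    proof (cases "q \<in> S")
      case True
      have "S = {q..1}"
      proof (intro equalityI subsetI)
        fix x assume "x \<in> {q..1}"
        then show "x \<in> S" using True sub2[of x] by (cases "x = q") auto
      qed (rule sub1)
      then show ?thesis using FTC unfolding S_def[symmetric] gq by simp
    next
      case False
      have "S = {q<..1}"
      proof (intro equalityI subsetI)
        fix x assume "x \<in> S"
        then show "x \<in> {q<..1}" using False sub1[of x] by (cases "x = q") auto
      qed (auto intro: sub2)
      then show ?thesis using FTC unfolding S_def[symmetric] gq by simp
    qed
  qed
qed

lemma cont_bound:
  fixes f :: "'a::metric_space \<Rightarrow> real"
  assumes "continuous_on S f" "compact S"
  obtains C where "C > 0" "\<And>x. x \<in> S \<Longrightarrow> \<bar>f x\<bar> \<le> C"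
proof -
  have "bounded (f ` S)" by (intro compact_imp_bounded compact_continuous_image assms)
  then obtain C where "C > 0" "\<forall>y\<in>f ` S. norm y \<le> C" by (auto simp: bounded_pos)
  then show ?thesis using that by auto
qed

lemma ibp01:
  fixes a g g' \<Phi> :: "real \<Rightarrow> real"
  assumes aint: "set_integrable lborel {0..1} a"
    and Phi: "\<And>t. t\<in>{0..1} \<Longrightarrow> \<Phi> t = \<Phi> 0 + (LINT r:{0..t}|lborel. a r)"
    and deriv: "\<And>t. t\<in>{0..1} \<Longrightarrow> (g has_real_derivative g' t) (at t)"
    and cont: "continuous_on {0..1} g'" and g0: "g 0 = 0" and g1: "g 1 = 0"
  shows "(LINT t:{0..1}|lborel. \<Phi> t * g' t) = - (LINT t:{0..1}|lborel. a t * g t)"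
proof -
  define aa where "aa r = indicator {0..1} r * a r" for r
  define gg where "gg t = indicator {0..1} t * g' t" for t
  have aaI: "integrable lborel aa" using aint by (simp add: set_integrable_def aa_def[abs_def])
  have [measurable]: "aa \<in> borel_measurable borel" using borel_measurable_integrable[OF aaI] by simp
  have [measurable]: "gg \<in> borel_measurable borel"
    unfolding gg_def using borel_measurable_continuous_on_indicator[OF _ cont] by simp
  obtain C where C: "C > 0" "\<And>t. t \<in> {0..1} \<Longrightarrow> \<bar>g' t\<bar> \<le> C"
    using cont_bound[OF cont compact_Icc] by blast
  have ggC: "\<bar>gg t\<bar> \<le> C" for t using C by (cases "t \<in> {0..1}") (auto simp: gg_def)
  define K where "K r t = aa r * (indicator {p::real\<times>real. fst p \<le> snd p} (r, t) * gg t)" for r t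
  have Km: "(\<lambda>(r, t). K r t) \<in> borel_measurable (lborel \<Otimes>\<^sub>M lborel)"
    unfolding K_def by measurable
  have ggint: "integrable lborel gg" unfolding gg_def
    using borel_integrable_compact[OF compact_Icc cont] by simp
  have Kint: "integrable (lborel \<Otimes>\<^sub>M lborel) (\<lambda>(r, t). K r t)"
  proof (rule lborel_pair.Fubini_integrable)
    show "(\<lambda>(r, t). K r t) \<in> borel_measurable (lborel \<Otimes>\<^sub>M lborel)" by (rule Km)
    show "AE r in lborel. integrable lborel (\<lambda>t. (\<lambda>(r, t). K r t) (r, t))"
    proof (rule AE_I2)
      fix r
      show "integrable lborel (\<lambda>t. (\<lambda>(r, t). K r t) (r, t))"
      proof (rule Bochner_Integration.integrable_bound[OF integrable_mult_right[OF ggint, of "\<bar>aa r\<bar>"]])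
        show "(\<lambda>t. (\<lambda>(r, t). K r t) (r, t)) \<in> borel_measurable lborel"
          using measurable_compose[OF measurable_Pair1'[of r lborel lborel] Km] by simp
        show "AE t in lborel. norm ((\<lambda>(r, t). K r t) (r, t)) \<le> norm (\<bar>aa r\<bar> * gg t)"
          by (rule AE_I2) (auto simp: K_def indicator_def abs_mult)
      qed
    qed
    show "integrable lborel (\<lambda>r. LINT t|lborel. norm ((\<lambda>(r, t). K r t) (r, t)))"
    proof (rule Bochner_Integration.integrable_bound[OF integrable_mult_right[OF integrable_abs[OF aaI], of "LINT t|lborel. \<bar>gg t\<bar>"]])
      show "(\<lambda>r. LINT t|lborel. norm ((\<lambda>(r, t). K r t) (r, t))) \<in> borel_measurable lborel"
        using Km by measurable
      show "AE r in lborel. norm (LINT t|lborel. norm ((\<lambda>(r, t). K r t) (r, t))) \<le> norm ((LINT t|lborel. \<bar>gg t\<bar>) * \<bar>aa r\<bar>)"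
      proof (rule AE_I2)
        fix r
        have "(LINT t|lborel. norm ((\<lambda>(r, t). K r t) (r, t))) \<le> (LINT t|lborel. \<bar>aa r\<bar> * \<bar>gg t\<bar>)"
        proof (rule integral_mono)
          show "integrable lborel (\<lambda>t. \<bar>aa r\<bar> * \<bar>gg t\<bar>)" using ggint by simp
          show "integrable lborel (\<lambda>t. norm ((\<lambda>(r, t). K r t) (r, t)))"
          proof (rule Bochner_Integration.integrable_bound[OF integrable_mult_right[OF integrable_abs[OF ggint], of "\<bar>aa r\<bar>"]])
            show "(\<lambda>t. norm ((\<lambda>(r, t). K r t) (r, t))) \<in> borel_measurable lborel"
              using measurable_compose[OF measurable_Pair1'[of r lborel lborel] Km] by simp
            show "AE t in lborel. norm (norm ((\<lambda>(r, t). K r t) (r, t))) \<le> norm (\<bar>aa r\<bar> * \<bar>gg t\<bar>)"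
              by (rule AE_I2) (auto simp: K_def indicator_def abs_mult)
          qed
          show "norm ((\<lambda>(r, t). K r t) (r, t)) \<le> \<bar>aa r\<bar> * \<bar>gg t\<bar>" for t
            by (auto simp: K_def indicator_def abs_mult)
        qed
        also have "\<dots> = (LINT t|lborel. \<bar>gg t\<bar>) * \<bar>aa r\<bar>" by simp
        finally show "norm (LINT t|lborel. norm ((\<lambda>(r, t). K r t) (r, t))) \<le> norm ((LINT t|lborel. \<bar>gg t\<bar>) * \<bar>aa r\<bar>)"
          by (simp add: integral_nonneg_AE)
      qed
    qed
  qed
  have Fub: "(LINT t|lborel. LINT r|lborel. K r t) = (LINT r|lborel. LINT t|lborel. K r t)"
    by (rule lborel_pair.Fubini_integral) (use Kint in simp)
  define A where "A t = (LINT r:{0..t}|lborel. a r)" for t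
  have i1: "(LINT r|lborel. K r t) = A t * gg t" for t
  proof (cases "t \<in> {0..1}")
    case True
    have "(LINT r|lborel. K r t) = (LINT r|lborel. (indicator {0..t} r * a r) * gg t)"
      by (rule Bochner_Integration.integral_cong[OF refl]) (use True in \<open>auto simp: K_def aa_def indicator_def\<close>)
    also have "\<dots> = A t * gg t" unfolding A_def set_lebesgue_integral_def by simp
    finally show ?thesis .
  next
    case False
    then have "K r t = 0" for r by (simp add: K_def gg_def)
    then show ?thesis using False by (simp add: gg_def)
  qed
  have i2: "(LINT t|lborel. K r t) = aa r * (g 1 - g r)" for r
  proof (cases "r \<in> {0..1}")
    case True
    have "(LINT t|lborel. K r t) = (LINT t|lborel. aa r * (indicator {r..1} t * g' t))"
      by (rule Bochner_Integration.integral_cong[OF refl]) (use True in \<open>auto simp: K_def gg_def indicator_def\<close>)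
    also have "\<dots> = aa r * (LINT t:{r..1}|lborel. g' t)" unfolding set_lebesgue_integral_def by simp
    also have "\<dots> = aa r * (g 1 - g r)" using FTC01(1)[OF deriv cont True] by simp
    finally show ?thesis .
  next
    case False
    then have "K r t = 0" for t by (simp add: K_def aa_def)
    then show ?thesis using False by (simp add: aa_def)
  qed
  have intgA: "integrable lborel (\<lambda>t. A t * gg t)"
    using lborel_pair.integrable_snd[of "\<lambda>r t. K r t"] Kint by (simp add: i1)
  have gg0: "(LINT t|lborel. gg t) = 0"
    using FTC01(1)[OF deriv cont, of 0] g0 g1 by (simp add: gg_def set_lebesgue_integral_def)
  have "(LINT t:{0..1}|lborel. \<Phi> t * g' t) = (LINT t|lborel. \<Phi> 0 * gg t + A t * gg t)"
    unfolding set_lebesgue_integral_def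
  proof (rule Bochner_Integration.integral_cong[OF refl])
    fix t
    show "indicator {0..1} t *\<^sub>R (\<Phi> t * g' t) = \<Phi> 0 * gg t + A t * gg t"
    proof (cases "t \<in> {0..1}")
      case True
      have "\<Phi> t = \<Phi> 0 + A t" using Phi[OF True] by (simp add: A_def)
      then show ?thesis using True by (simp add: gg_def algebra_simps)
    qed (simp add: gg_def)
  qed
  also have "\<dots> = \<Phi> 0 * (LINT t|lborel. gg t) + (LINT t|lborel. A t * gg t)"
    using ggint intgA by simp
  also have "\<dots> = (LINT t|lborel. LINT r|lborel. K r t)" using gg0 by (simp add: i1)
  also have "\<dots> = (LINT r|lborel. aa r * (g 1 - g r))" using Fub by (simp add: i2)
  also have "\<dots> = - (LINT t:{0..1}|lborel. a t * g t)"
    unfolding set_lebesgue_integral_def aa_def g1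
    by (simp flip: integral_minus add: algebra_simps)
  finally show ?thesis .
qed

lemma pos_meas:
  fixes W :: "real\<times>real \<Rightarrow> real" and T :: "real\<times>real \<Rightarrow> real\<times>real"
  assumes Wint: "integrable lborel (\<lambda>z. indicator unit_square z * W z)"
    and Tm[measurable]: "T \<in> borel \<rightarrow>\<^sub>M borel" and TD: "\<And>z. T z \<in> unit_square"
  defines "M \<equiv> distr (density lborel (\<lambda>z. ennreal (indicator unit_square z * max 0 (W z)))) borel T"
  shows "finite_meas_on_square M"
    and "\<And>f. continuous_on unit_square f \<Longrightarrow>
          integrable lborel (\<lambda>z. (indicator unit_square z * max 0 (W z)) * f (T z)) \<and>
          (LINT z:unit_square|M. f z) = (LINT z|lborel. (indicator unit_square z * max 0 (W z)) * f (T z))"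
proof -
  define g where "g z = indicator unit_square z * max 0 (W z)" for z
  have Wm[measurable]: "(\<lambda>z. indicator unit_square z * W z) \<in> borel_measurable borel"
    using borel_measurable_integrable[OF Wint] by simp
  have gm[measurable]: "g \<in> borel_measurable borel"
  proof -
    have "g = (\<lambda>z. max 0 (indicator unit_square z * W z))"
      by (auto simp: g_def indicator_def fun_eq_iff)
    then show ?thesis by simp
  qed
  have gabs: "\<bar>g z\<bar> \<le> \<bar>indicator unit_square z * W z\<bar>" for z by (auto simp: g_def indicator_def)
  have gint: "integrable lborel g"
    by (rule Bochner_Integration.integrable_bound[OF Wint]) (use gabs in auto)
  have g0: "0 \<le> g z" for z by (simp add: g_def)
  have Tm': "T \<in> density lborel (\<lambda>z. ennreal (g z)) \<rightarrow>\<^sub>M borel" by simp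
  show "finite_meas_on_square M"
    unfolding finite_meas_on_square_def
  proof (intro conjI)
    show "sets M = sets borel" by (simp add: M_def)
    show "finite_measure M"
    proof (rule finite_measureI)
      have "emeasure M (space M) = emeasure (density lborel (\<lambda>z. ennreal (g z))) (T -` UNIV \<inter> UNIV)"
        unfolding M_def g_def[symmetric] by (subst emeasure_distr) auto
      also have "\<dots> = (\<integral>\<^sup>+ z. ennreal (g z) * indicator UNIV z \<partial>lborel)" by (subst emeasure_density) auto
      also have "\<dots> = (\<integral>\<^sup>+ z. ennreal (g z) \<partial>lborel)" by simp
      also have "\<dots> \<noteq> \<infinity>" using integrableD(2)[OF gint] .
      finally show "emeasure M (space M) \<noteq> \<infinity>" .
    qed
    have "emeasure M (UNIV - unit_square) = emeasure (density lborel (\<lambda>z. ennreal (g z))) (T -` (UNIV - unit_square) \<inter> UNIV)"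
      unfolding M_def g_def[symmetric] by (subst emeasure_distr) auto
    also have "T -` (UNIV - unit_square) \<inter> UNIV = {}" using TD by blast
    finally show "emeasure M (UNIV - unit_square) = 0" by simp
  qed
  fix f :: "real\<times>real \<Rightarrow> real" assume fc: "continuous_on unit_square f"
  have fim[measurable]: "(\<lambda>z. indicator unit_square z * f z) \<in> borel_measurable borel"
    using borel_measurable_continuous_on_indicator[OF D_sets fc] by simp
  have fTm[measurable]: "(\<lambda>z. f (T z)) \<in> borel_measurable borel"
  proof -
    have "(\<lambda>z. indicator unit_square (T z) * f (T z)) \<in> borel_measurable borel" by measurable
    then show ?thesis using TD by simp
  qed
  obtain C where C: "C > 0" "\<And>z. z \<in> unit_square \<Longrightarrow> \<bar>f z\<bar> \<le> C"
    using cont_bound[OF fc] compact_Times[OF compact_Icc compact_Icc] by metis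
  have fTC: "\<bar>f (T z)\<bar> \<le> C" for z using C TD by blast
  show "integrable lborel (\<lambda>z. (indicator unit_square z * max 0 (W z)) * f (T z)) \<and>
          (LINT z:unit_square|M. f z) = (LINT z|lborel. (indicator unit_square z * max 0 (W z)) * f (T z))"
  proof
    show "integrable lborel (\<lambda>z. (indicator unit_square z * max 0 (W z)) * f (T z))"
    proof (rule Bochner_Integration.integrable_bound)
      show "integrable lborel (\<lambda>z. C * g z)" using gint by simp
      show "(\<lambda>z. indicator unit_square z * max 0 (W z) * f (T z)) \<in> borel_measurable lborel"
        using gm fTm unfolding g_def by simp
      show "AE z in lborel. norm (indicator unit_square z * max 0 (W z) * f (T z)) \<le> norm (C * g z)"
      proof (rule AE_I2)
        fix z
        have "\<bar>g z * f (T z)\<bar> \<le> g z * C" using fTC[of z] g0[of z] by (simp add: abs_mult mult_left_mono)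
        moreover have "indicator unit_square z * max 0 (W z) = g z" by (simp add: g_def)
        ultimately show "norm (indicator unit_square z * max 0 (W z) * f (T z)) \<le> norm (C * g z)"
          using g0[of z] C by (simp add: algebra_simps)
      qed
    qed
    have "(LINT z:unit_square|M. f z) = (LINT z|density lborel (\<lambda>z. ennreal (g z)). indicator unit_square (T z) * f (T z))"
      unfolding M_def g_def[symmetric] set_lebesgue_integral_def
      by (subst integral_distr) auto
    also have "\<dots> = (LINT z|density lborel (\<lambda>z. ennreal (g z)). f (T z))" using TD by simp
    also have "\<dots> = (LINT z|lborel. g z * f (T z))"
      by (subst integral_density) (auto simp: g0)
    finally show "(LINT z:unit_square|M. f z) = (LINT z|lborel. (indicator unit_square z * max 0 (W z)) * f (T z))"
      by (simp add: g_def)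
  qed
qed

lemma flow_facts:
  assumes flow: "lagrangian_flow v \<phi>"
  shows flow_range: "\<And>t x. t \<in> {0..1} \<Longrightarrow> x \<in> {0..1} \<Longrightarrow> \<phi> t x \<in> {0..1}"
    and flow_mono: "\<And>t. t \<in> {0..1} \<Longrightarrow> mono_on {0..1} (\<phi> t)"
    and flow_cont: "\<And>x. x \<in> {0..1} \<Longrightarrow> continuous_on {0..1} (\<lambda>t. \<phi> t x)"
    and flow_int: "\<And>x. x \<in> {0..1} \<Longrightarrow> set_integrable lborel {0..1} (\<lambda>r. v r (\<phi> r x))"
    and flow_eq: "\<And>t x. t \<in> {0..1} \<Longrightarrow> x \<in> {0..1} \<Longrightarrow>
                    \<phi> t x = \<phi> 0 x + (LINT r:{0..t}|lborel. v r (\<phi> r x))"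
proof -
  note F = flow[unfolded lagrangian_flow_def]
  show "\<And>t x. t \<in> {0..1} \<Longrightarrow> x \<in> {0..1} \<Longrightarrow> \<phi> t x \<in> {0..1}" using F by blast
  show "\<And>t. t \<in> {0..1} \<Longrightarrow> mono_on {0..1} (\<phi> t)" using F by blast
  show "\<And>x. x \<in> {0..1} \<Longrightarrow> continuous_on {0..1} (\<lambda>t. \<phi> t x)"
    using F abs_cont_imp_cont by blast
  show "\<And>x. x \<in> {0..1} \<Longrightarrow> set_integrable lborel {0..1} (\<lambda>r. v r (\<phi> r x))"
  proof -
    fix x :: real assume "x \<in> {0..1}"
    then have "\<forall>s t. 0 \<le> s \<and> s < t \<and> t \<le> 1 \<longrightarrow>
           set_integrable lborel {s..t} (\<lambda>r. v r (\<phi> r x)) \<and>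
           \<phi> t x - \<phi> s x = (LINT r:{s..t}|lborel. v r (\<phi> r x))" using F by blast
    then show "set_integrable lborel {0..1} (\<lambda>r. v r (\<phi> r x))" by (metis zero_less_one order_refl)
  qed
  fix t x :: real assume t: "t \<in> {0..1}" and x: "x \<in> {0..1}"
  then have H: "\<forall>s t. 0 \<le> s \<and> s < t \<and> t \<le> 1 \<longrightarrow>
           set_integrable lborel {s..t} (\<lambda>r. v r (\<phi> r x)) \<and>
           \<phi> t x - \<phi> s x = (LINT r:{s..t}|lborel. v r (\<phi> r x))" using F by blast
  show "\<phi> t x = \<phi> 0 x + (LINT r:{0..t}|lborel. v r (\<phi> r x))"
  proof (cases "t = 0")
    case True
    have "(LINT r:{0..0}|lborel. v r (\<phi> r x)) = 0"
      unfolding set_lebesgue_integral_def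
      by (rule integral_eq_zero_AE) (use AE_lborel_singleton[of 0] in \<open>auto elim!: eventually_mono\<close>)
    then show ?thesis using True by simp
  next
    case False
    then have "0 < t" "t \<le> 1" using t by auto
    then show ?thesis using H by (metis order_refl diff_add_cancel add.commute)
  qed
qed

lemma test_fun_facts:
  assumes "test_fun f"
  obtains fx fxt where
    "\<And>z. ((\<lambda>y. f (fst z, y)) has_real_derivative fx z) (at (snd z))"
    "\<And>z. ((\<lambda>s. fx (s, snd z)) has_real_derivative fxt z) (at (fst z))"
    "continuous_on UNIV f" "continuous_on UNIV fx" "continuous_on UNIV fxt"
    "\<And>z. z \<notin> {0<..<1} \<times> {0<..<1} \<Longrightarrow> f z = 0"
proof -
  have C2: "Ck_on 2 UNIV f" and supp: "\<And>z. z \<notin> {0<..<1} \<times> {0<..<1} \<Longrightarrow> f z = 0"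
    using assms unfolding test_fun_def by blast+
  have C2': "Ck_on (Suc 1) UNIV f" using C2 by (simp only: Suc_1)
  from C2'[unfolded Ck_on.simps(2)] obtain ft fx where cf: "continuous_on UNIV f"
     and d1: "\<And>z. ((\<lambda>y. f (fst z, y)) has_real_derivative fx z) (at (snd z))"
     and c1: "Ck_on 1 UNIV fx"
    by blast
  have c1': "Ck_on (Suc 0) UNIV fx" using c1 by simp
  from c1'[unfolded Ck_on.simps] obtain fxt where cfx: "continuous_on UNIV fx"
     and d2: "\<And>z. ((\<lambda>s. fx (s, snd z)) has_real_derivative fxt z) (at (fst z))"
     and c2: "continuous_on UNIV fxt"
    by blast
  show ?thesis using that[OF d1 d2 cf cfx c2 supp] .
qed

lemma D_compact: "compact unit_square" by (intro compact_Times compact_Icc)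

lemma D_int: "integrable lborel (\<lambda>z::real\<times>real. indicator unit_square z * (c::real))"
  using borel_integrable_compact[OF D_compact, of "\<lambda>_. c"] by simp

lemma abs_le_sq: "\<bar>a::real\<bar> \<le> 1 + a\<^sup>2"
proof (cases "\<bar>a\<bar> \<le> 1")
  case True
  have "0 \<le> a\<^sup>2" by simp
  then show ?thesis using True by linarith
next
  case False
  have "\<bar>a\<bar> * 1 \<le> \<bar>a\<bar> * \<bar>a\<bar>" by (rule mult_left_mono) (use False in auto)
  moreover have "\<bar>a\<bar> * \<bar>a\<bar> = a\<^sup>2" by (simp add: power2_eq_square abs_mult_self_eq)
  ultimately show ?thesis by linarith
qed

lemma v_facts:
  assumes v: "L2_H10 v w"
  shows v_meas: "(\<lambda>z. indicator unit_square z * v (fst z) (snd z)) \<in> borel_measurable borel"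
    and w_meas: "(\<lambda>z. indicator unit_square z * w (fst z) (snd z)) \<in> borel_measurable borel"
    and w_int: "integrable lborel (\<lambda>z. indicator unit_square z * w (fst z) (snd z))"
    and v_AE: "AE t in lborel. t \<in> {0..1} \<longrightarrow>
        set_integrable lborel {0..1} (w t) \<and>
        (\<forall>x\<in>{0..1}. v t x = (LINT s:{0..x}|lborel. w t s))"
proof -
  note V = v[unfolded L2_H10_def]
  show vm: "(\<lambda>z. indicator unit_square z * v (fst z) (snd z)) \<in> borel_measurable borel"
    using V borel_measurable_restrict_space_iff[of unit_square borel "\<lambda>z. v (fst z) (snd z)"] by simp
  show wm: "(\<lambda>z. indicator unit_square z * w (fst z) (snd z)) \<in> borel_measurable borel"
    using V borel_measurable_restrict_space_iff[of unit_square borel "\<lambda>z. w (fst z) (snd z)"] by simp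
  show "AE t in lborel. t \<in> {0..1} \<longrightarrow>
        set_integrable lborel {0..1} (w t) \<and>
        (\<forall>x\<in>{0..1}. v t x = (LINT s:{0..x}|lborel. w t s))"
    using V by (auto elim!: eventually_mono)
  have w2: "integrable lborel (\<lambda>z. indicator unit_square z * (w (fst z) (snd z))\<^sup>2)"
    using V by (simp add: set_integrable_def)
  show "integrable lborel (\<lambda>z. indicator unit_square z * w (fst z) (snd z))"
  proof (rule Bochner_Integration.integrable_bound)
    show "integrable lborel (\<lambda>z. indicator unit_square z * 1 + indicator unit_square z * (w (fst z) (snd z))\<^sup>2)"
      using D_int[of 1] w2 by (rule Bochner_Integration.integrable_add)
    show "(\<lambda>z. indicator unit_square z * w (fst z) (snd z)) \<in> borel_measurable lborel" using wm by simp
    show "AE z in lborel. norm (indicator unit_square z * w (fst z) (snd z))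
       \<le> norm (indicator unit_square z * 1 + indicator unit_square z * (w (fst z) (snd z))\<^sup>2)"
    proof (rule AE_I2)
      fix z :: "real \<times> real"
      have "\<bar>w (fst z) (snd z)\<bar> \<le> 1 + (w (fst z) (snd z))\<^sup>2" by (rule abs_le_sq)
      then show "norm (indicator unit_square z * w (fst z) (snd z))
         \<le> norm (indicator unit_square z * 1 + indicator unit_square z * (w (fst z) (snd z))\<^sup>2)"
        by (auto simp: indicator_def)
    qed
  qed
qed

lemma a_meas:
  assumes v: "L2_H10 v w" and flow: "lagrangian_flow v \<phi>"
  shows "(\<lambda>z. indicator unit_square z * v (fst z) (\<phi> (fst z) (snd z))) \<in> borel_measurable borel"
proof -
  define pt where "pt z = indicator unit_square z * \<phi> (fst z) (snd z)" for z :: "real \<times> real"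
  have pm: "pt \<in> borel_measurable borel"
    unfolding pt_def by (rule phi_meas[OF flow_mono[OF flow] flow_cont[OF flow]])
  have Pm: "(\<lambda>z. (fst z, pt z)) \<in> borel \<rightarrow>\<^sub>M (borel :: (real\<times>real) measure)"
  proof -
    have "(\<lambda>z. (fst z, pt z)) \<in> borel \<rightarrow>\<^sub>M (borel \<Otimes>\<^sub>M borel :: (real\<times>real) measure)"
    proof (rule measurable_Pair)
      show "fst \<in> (borel :: (real\<times>real) measure) \<rightarrow>\<^sub>M borel"
        using measurable_fst[of "borel::real measure" "borel::real measure"] by (simp only: borel_prod)
      show "pt \<in> borel \<rightarrow>\<^sub>M borel" by (rule pm)
    qed
    then show ?thesis by (simp only: borel_prod)
  qed
  have "(\<lambda>z. (\<lambda>z. indicator unit_square z * v (fst z) (snd z)) (fst z, pt z)) \<in> borel_measurable borel"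
    by (rule measurable_compose[OF Pm v_meas[OF v]])
  then have "(\<lambda>z. indicator unit_square z * ((\<lambda>z. indicator unit_square z * v (fst z) (snd z)) (fst z, pt z))) \<in> borel_measurable borel"
    by (rule borel_measurable_times[OF borel_measurable_indicator[OF D_sets]])
  moreover have "(\<lambda>z. indicator unit_square z * ((\<lambda>z. indicator unit_square z * v (fst z) (snd z)) (fst z, pt z)))
     = (\<lambda>z. indicator unit_square z * v (fst z) (\<phi> (fst z) (snd z)))"
  proof (rule ext)
    fix z :: "real \<times> real"
    show "indicator unit_square z * ((\<lambda>z. indicator unit_square z * v (fst z) (snd z)) (fst z, pt z))
     = indicator unit_square z * v (fst z) (\<phi> (fst z) (snd z))"
  proof (cases "z \<in> unit_square")
    case True
    then have "fst z \<in> {0..1}" "snd z \<in> {0..1}" by (auto simp: mem_Times_iff)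
    then have "\<phi> (fst z) (snd z) \<in> {0..1}" by (rule flow_range[OF flow])
    then show ?thesis using True by (simp add: pt_def mem_Times_iff)
  qed simp
  qed
  ultimately show ?thesis by simp
qed

lemma inner_t:
  fixes h h' :: "real \<Rightarrow> real"
  assumes mono: "mono_on {0..1} (\<phi> t)" and range: "\<And>x. x\<in>{0..1} \<Longrightarrow> \<phi> t x \<in> {0..1}"
    and wt: "set_integrable lborel {0..1} (w t)"
    and vt: "\<And>x. x\<in>{0..1} \<Longrightarrow> v t x = (LINT s:{0..x}|lborel. w t s)"
    and deriv: "\<And>x. x \<in> {0..1} \<Longrightarrow> (h has_real_derivative h' x) (at x)"
    and cont: "continuous_on {0..1} h'" and h1: "h 1 = 0"
  shows "(LINT x:{0..1}|lborel. v t (\<phi> t x) * h' x) = - (LINT y:{0..1}|lborel. w t y * h (gen_inv \<phi> t y))"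
proof -
  define ww where "ww y = indicator {0..1} y * w t y" for y
  define hh where "hh x = indicator {0..1} x * h' x" for x
  define P where "P x = indicator {0..1} x * \<phi> t x" for x
  have wwI: "integrable lborel ww" using wt by (simp add: set_integrable_def ww_def[abs_def])
  have [measurable]: "ww \<in> borel_measurable borel" using borel_measurable_integrable[OF wwI] by simp
  have [measurable]: "hh \<in> borel_measurable borel"
    unfolding hh_def using borel_measurable_continuous_on_indicator[OF _ cont] by simp
  have [measurable]: "P \<in> borel_measurable borel" unfolding P_def[abs_def] by (rule mono_meas_ind[OF mono])
  have hhint: "integrable lborel hh" unfolding hh_def
    using borel_integrable_compact[OF compact_Icc cont] by simp
  define K where "K x y = hh x * (indicator {p::real\<times>real. snd p \<le> P (fst p)} (x, y) * ww y)" for x y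
  have Km: "(\<lambda>(x, y). K x y) \<in> borel_measurable (lborel \<Otimes>\<^sub>M lborel)"
    unfolding K_def by measurable
  have Kint: "integrable (lborel \<Otimes>\<^sub>M lborel) (\<lambda>(x, y). K x y)"
  proof (rule lborel_pair.Fubini_integrable)
    show "(\<lambda>(x, y). K x y) \<in> borel_measurable (lborel \<Otimes>\<^sub>M lborel)" by (rule Km)
    show "AE x in lborel. integrable lborel (\<lambda>y. (\<lambda>(x, y). K x y) (x, y))"
    proof (rule AE_I2)
      fix x
      show "integrable lborel (\<lambda>y. (\<lambda>(x, y). K x y) (x, y))"
      proof (rule Bochner_Integration.integrable_bound)
        show "integrable lborel (\<lambda>y. \<bar>hh x\<bar> * ww y)" using wwI by simp
        show "(\<lambda>y. (\<lambda>(x, y). K x y) (x, y)) \<in> borel_measurable lborel"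
          using measurable_compose[OF measurable_Pair1'[of x lborel lborel] Km] by simp
        show "AE y in lborel. norm ((\<lambda>(x, y). K x y) (x, y)) \<le> norm (\<bar>hh x\<bar> * ww y)"
          by (rule AE_I2) (auto simp: K_def indicator_def abs_mult)
      qed
    qed
    show "integrable lborel (\<lambda>x. LINT y|lborel. norm ((\<lambda>(x, y). K x y) (x, y)))"
    proof (rule Bochner_Integration.integrable_bound)
      show "integrable lborel (\<lambda>x. (LINT y|lborel. \<bar>ww y\<bar>) * \<bar>hh x\<bar>)" using hhint by simp
      show "(\<lambda>x. LINT y|lborel. norm ((\<lambda>(x, y). K x y) (x, y))) \<in> borel_measurable lborel"
        using Km by measurable
      show "AE x in lborel. norm (LINT y|lborel. norm ((\<lambda>(x, y). K x y) (x, y))) \<le> norm ((LINT y|lborel. \<bar>ww y\<bar>) * \<bar>hh x\<bar>)"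
      proof (rule AE_I2)
        fix x
        have "(LINT y|lborel. norm ((\<lambda>(x, y). K x y) (x, y))) \<le> (LINT y|lborel. \<bar>hh x\<bar> * \<bar>ww y\<bar>)"
        proof (rule integral_mono)
          show "integrable lborel (\<lambda>y. \<bar>hh x\<bar> * \<bar>ww y\<bar>)" using wwI by simp
          show "integrable lborel (\<lambda>y. norm ((\<lambda>(x, y). K x y) (x, y)))"
          proof (rule Bochner_Integration.integrable_bound)
            show "integrable lborel (\<lambda>y. \<bar>hh x\<bar> * \<bar>ww y\<bar>)" using wwI by simp
            show "(\<lambda>y. norm ((\<lambda>(x, y). K x y) (x, y))) \<in> borel_measurable lborel"
              using measurable_compose[OF measurable_Pair1'[of x lborel lborel] Km] by simp
            show "AE y in lborel. norm (norm ((\<lambda>(x, y). K x y) (x, y))) \<le> norm (\<bar>hh x\<bar> * \<bar>ww y\<bar>)"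
              by (rule AE_I2) (auto simp: K_def indicator_def abs_mult)
          qed
          show "norm ((\<lambda>(x, y). K x y) (x, y)) \<le> \<bar>hh x\<bar> * \<bar>ww y\<bar>" for y
            by (auto simp: K_def indicator_def abs_mult)
        qed
        also have "\<dots> = (LINT y|lborel. \<bar>ww y\<bar>) * \<bar>hh x\<bar>" by simp
        finally show "norm (LINT y|lborel. norm ((\<lambda>(x, y). K x y) (x, y))) \<le> norm ((LINT y|lborel. \<bar>ww y\<bar>) * \<bar>hh x\<bar>)"
          by (simp add: integral_nonneg_AE)
      qed
    qed
  qed
  have Fub: "(LINT y|lborel. LINT x|lborel. K x y) = (LINT x|lborel. LINT y|lborel. K x y)"
    by (rule lborel_pair.Fubini_integral) (use Kint in simp)
  have i1: "(LINT y|lborel. K x y) = indicator {0..1} x * (v t (\<phi> t x) * h' x)" for x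
  proof (cases "x \<in> {0..1}")
    case True
    have "(LINT y|lborel. K x y) = (LINT y|lborel. (indicator {0..\<phi> t x} y * w t y) * hh x)"
    proof (rule Bochner_Integration.integral_cong[OF refl])
      fix y
      have "\<phi> t x \<le> 1" using range[OF True] by simp
      then show "K x y = (indicator {0..\<phi> t x} y * w t y) * hh x"
        using True by (auto simp: K_def ww_def P_def indicator_def)
    qed
    also have "\<dots> = (LINT y:{0..\<phi> t x}|lborel. w t y) * hh x" unfolding set_lebesgue_integral_def by simp
    also have "\<dots> = v t (\<phi> t x) * hh x" using vt[OF range[OF True]] by simp
    finally show ?thesis using True by (simp add: hh_def)
  next
    case False
    then have "K x y = 0" for y by (simp add: K_def hh_def)
    then show ?thesis using False by simp
  qed
  have i2: "(LINT x|lborel. K x y) = - indicator {0..1} y * (w t y * h (gen_inv \<phi> t y))" for y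
  proof (cases "y \<in> {0..1}")
    case True
    have "(LINT x|lborel. K x y) = (LINT x|lborel. ww y * (indicator {x\<in>{0..1}. y \<le> \<phi> t x} x * h' x))"
      by (rule Bochner_Integration.integral_cong[OF refl]) (auto simp: K_def hh_def P_def indicator_def)
    also have "\<dots> = ww y * (LINT x:{x\<in>{0..1}. y \<le> \<phi> t x}|lborel. h' x)"
      unfolding set_lebesgue_integral_def by simp
    also have "\<dots> = ww y * (h 1 - h (gen_inv \<phi> t y))" using level_set_FTC[of \<phi> t h h' y, OF mono deriv cont] by simp
    finally show ?thesis using True h1 by (simp add: ww_def)
  next
    case False
    then have "K x y = 0" for x by (simp add: K_def ww_def)
    then show ?thesis using False by simp
  qed
  have "(LINT x:{0..1}|lborel. v t (\<phi> t x) * h' x) = (LINT x|lborel. LINT y|lborel. K x y)"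
    unfolding set_lebesgue_integral_def by (simp add: i1)
  also have "\<dots> = (LINT y|lborel. LINT x|lborel. K x y)" using Fub by simp
  also have "\<dots> = - (LINT y:{0..1}|lborel. w t y * h (gen_inv \<phi> t y))"
    unfolding set_lebesgue_integral_def i2 by (simp flip: integral_minus)
  finally show ?thesis .
qed

definition TT :: "(real \<Rightarrow> real \<Rightarrow> real) \<Rightarrow> real \<times> real \<Rightarrow> real \<times> real" where
  "TT \<phi> z = (indicator unit_square z * fst z, indicator unit_square z * gen_inv \<phi> (fst z) (snd z))"

lemma TT_in: "TT \<phi> z \<in> unit_square"
  using gen_inv_range[of \<phi> "fst z" "snd z"] by (cases "z \<in> unit_square") (auto simp: TT_def mem_Times_iff)

lemma TT_eq: "z \<in> unit_square \<Longrightarrow> TT \<phi> z = (fst z, gen_inv \<phi> (fst z) (snd z))"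
  by (simp add: TT_def)

lemma TT_meas:
  assumes flow: "lagrangian_flow v \<phi>"
  shows "TT \<phi> \<in> borel \<rightarrow>\<^sub>M (borel :: (real\<times>real) measure)"
proof -
  have pm: "(\<lambda>z. indicator unit_square z * gen_inv \<phi> (fst z) (snd z)) \<in> borel_measurable borel"
    using psi_meas[OF flow_mono[OF flow] flow_cont[OF flow]]
      borel_measurable_restrict_space_iff[of unit_square borel "\<lambda>z. gen_inv \<phi> (fst z) (snd z)"] by simp
  have fm: "(\<lambda>z. indicator unit_square z * fst z) \<in> borel_measurable (borel :: (real\<times>real) measure)"
  proof -
    have "fst \<in> (borel :: (real\<times>real) measure) \<rightarrow>\<^sub>M borel"
      using measurable_fst[of "borel::real measure" "borel::real measure"] by (simp only: borel_prod)
    then show ?thesis by (intro borel_measurable_times) auto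
  qed
  have "TT \<phi> \<in> borel \<rightarrow>\<^sub>M (borel \<Otimes>\<^sub>M borel :: (real\<times>real) measure)"
    unfolding TT_def[abs_def] by (rule measurable_Pair[OF fm pm])
  then show ?thesis by (simp only: borel_prod)
qed

lemma G_int:
  fixes g :: "real \<times> real \<Rightarrow> real"
  assumes v: "L2_H10 v w" and flow: "lagrangian_flow v \<phi>"
    and gm: "g \<in> borel_measurable borel" and gC: "\<And>z. z \<in> unit_square \<Longrightarrow> \<bar>g z\<bar> \<le> C"
  shows "integrable (lborel \<Otimes>\<^sub>M lborel) (\<lambda>(t,x). indicator unit_square (t,x) * (v t (\<phi> t x) * g (t,x)))"
proof -
  define G where "G t x = indicator unit_square (t,x) * (v t (\<phi> t x) * g (t,x))" for t x
  have C0: "0 \<le> C" using gC[of "(0,0)"] by (auto simp: mem_Times_iff)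
  have Gm: "(\<lambda>(t,x). G t x) \<in> borel_measurable (lborel \<Otimes>\<^sub>M lborel)"
  proof -
    have "(\<lambda>z. (indicator unit_square z * v (fst z) (\<phi> (fst z) (snd z))) * g z) \<in> borel_measurable borel"
      using a_meas[OF v flow] gm by (rule borel_measurable_times)
    moreover have "(\<lambda>(t,x). G t x) = (\<lambda>z. (indicator unit_square z * v (fst z) (\<phi> (fst z) (snd z))) * g z)"
      by (auto simp: G_def fun_eq_iff)
    ultimately show ?thesis by (simp add: lborel_prod)
  qed
  have Gx: "(\<lambda>x. G t x) \<in> borel_measurable lborel" for t
    using measurable_compose[OF measurable_Pair1'[of t lborel lborel] Gm] by simp
  define Wt where "Wt t = (LINT y|lborel. \<bar>indicator unit_square (t,y) * w t y\<bar>)" for t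
  have Wt0: "0 \<le> Wt t" for t unfolding Wt_def by (rule integral_nonneg_AE) auto
  have Wint: "integrable lborel Wt"
  proof -
    have "integrable lborel (\<lambda>z. \<bar>indicator unit_square z * w (fst z) (snd z)\<bar>)"
      using w_int[OF v] by simp
    then have "integrable (lborel \<Otimes>\<^sub>M lborel) (\<lambda>z. \<bar>indicator unit_square z * w (fst z) (snd z)\<bar>)"
      by (simp add: lborel_prod)
    from lborel_pair.integrable_fst'[OF this] show ?thesis by (simp add: Wt_def[abs_def])
  qed
  define good where "good t \<longleftrightarrow> t \<in> {0..1} \<longrightarrow>
        set_integrable lborel {0..1} (w t) \<and>
        (\<forall>x\<in>{0..1}. v t x = (LINT s:{0..x}|lborel. w t s))" for t
  have AEgood: "AE t in lborel. good t" using v_AE[OF v] unfolding good_def .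
  have vbound: "\<bar>v t y\<bar> \<le> Wt t" if g: "good t" and t: "t \<in> {0..1}" and y: "y \<in> {0..1}" for t y
  proof -
    have wi: "integrable lborel (\<lambda>s. indicator {0..1} s * w t s)"
      using g t by (simp add: good_def set_integrable_def)
    have eqW: "(\<lambda>s. \<bar>indicator unit_square (t,s) * w t s\<bar>) = (\<lambda>s. \<bar>indicator {0..1} s * w t s\<bar>)"
      using t by (auto simp: fun_eq_iff indicator_def mem_Times_iff)
    have wm1: "(\<lambda>s. indicator {0..1} s * w t s) \<in> borel_measurable borel"
      using borel_measurable_integrable[OF wi] by simp
    have eqy: "(\<lambda>s. \<bar>indicator {0..y} s * w t s\<bar>) = (\<lambda>s. \<bar>indicator {0..y} s * (indicator {0..1} s * w t s)\<bar>)"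
      using y by (auto simp: fun_eq_iff indicator_def)
    have wm2: "(\<lambda>s. \<bar>indicator {0..y} s * w t s\<bar>) \<in> borel_measurable lborel"
      unfolding eqy using wm1 by simp
    have wi2: "integrable lborel (\<lambda>s. \<bar>indicator {0..y} s * w t s\<bar>)"
      by (rule Bochner_Integration.integrable_bound[OF integrable_abs[OF wi] wm2])
         (use y in \<open>auto simp: indicator_def intro!: AE_I2\<close>)
    have "\<bar>v t y\<bar> = \<bar>LINT s|lborel. indicator {0..y} s * w t s\<bar>"
      using g t y by (simp add: good_def set_lebesgue_integral_def)
    also have "\<dots> \<le> (LINT s|lborel. \<bar>indicator {0..y} s * w t s\<bar>)"
      by (rule integral_abs_bound)
    also have "\<dots> \<le> (LINT s|lborel. \<bar>indicator {0..1} s * w t s\<bar>)"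
      by (rule integral_mono[OF wi2 integrable_abs[OF wi]]) (use y in \<open>auto simp: indicator_def\<close>)
    also have "\<dots> = Wt t" unfolding Wt_def eqW ..
    finally show ?thesis .
  qed
  have goodint: "integrable lborel (\<lambda>x. G t x) \<and> (LINT x|lborel. norm (G t x)) \<le> C * Wt t" if g: "good t" for t
  proof (cases "t \<in> {0..1}")
    case False
    then have "G t x = 0" for x by (auto simp: G_def indicator_def mem_Times_iff)
    then show ?thesis using C0 Wt0[of t] by simp
  next
    case True
    have bd: "\<bar>G t x\<bar> \<le> indicator {0..1} x * (C * Wt t)" for x
    proof (cases "x \<in> {0..1}")
      case True2: True
      have "\<bar>v t (\<phi> t x)\<bar> * \<bar>g (t,x)\<bar> \<le> Wt t * C"
        by (rule mult_mono[OF vbound[OF g True flow_range[OF flow True True2]] gC]) (use True True2 Wt0 in \<open>auto simp: mem_Times_iff\<close>)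
      then show ?thesis using True True2 by (simp add: G_def mem_Times_iff abs_mult mult.commute)
    qed (auto simp: G_def indicator_def mem_Times_iff)
    have bi: "integrable lborel (\<lambda>x::real. indicator {0..1} x * (C * Wt t))"
    proof -
      have "integrable lborel (\<lambda>x. indicator {0..1::real} x *\<^sub>R (C * Wt t))"
        by (rule borel_integrable_compact) auto
      then show ?thesis by (simp add: mult.commute)
    qed
    have gi: "integrable lborel (\<lambda>x. G t x)"
      by (rule Bochner_Integration.integrable_bound[OF bi Gx]) (use bd C0 Wt0[of t] in \<open>auto intro!: AE_I2\<close>)
    have "(LINT x|lborel. norm (G t x)) \<le> (LINT x::real|lborel. indicator {0..1} x * (C * Wt t))"
      by (rule integral_mono[OF integrable_norm[OF gi] bi]) (use bd in simp)
    also have "\<dots> = C * Wt t" by simp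
    finally show ?thesis using gi by simp
  qed
  show ?thesis
    unfolding G_def[symmetric]
  proof (rule lborel_pair.Fubini_integrable[OF Gm])
    show "AE t in lborel. integrable lborel (\<lambda>x. (\<lambda>(t,x). G t x) (t, x))"
      using AEgood by eventually_elim (use goodint in simp)
    show "integrable lborel (\<lambda>t. LINT x|lborel. norm ((\<lambda>(t,x). G t x) (t, x)))"
    proof (rule Bochner_Integration.integrable_bound[OF integrable_mult_right[OF Wint, of C]])
      show "(\<lambda>t. LINT x|lborel. norm ((\<lambda>(t,x). G t x) (t, x))) \<in> borel_measurable lborel"
        using Gm by measurable
      show "AE t in lborel. norm (LINT x|lborel. norm ((\<lambda>(t,x). G t x) (t, x))) \<le> norm (C * Wt t)"
        using AEgood
      proof eventually_elim
        case (elim t)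
        have "0 \<le> (LINT x|lborel. norm (G t x))" by (rule integral_nonneg_AE) auto
        then show ?case using goodint[OF elim] C0 Wt0[of t] by simp
      qed
    qed
  qed
qed

lemma measures_exist:
  assumes v: "L2_H10 v w" and flow: "lagrangian_flow v \<phi>"
  shows "\<exists>M1 M2. finite_meas_on_square M1 \<and> finite_meas_on_square M2 \<and>
     (\<forall>f. continuous_on unit_square f \<longrightarrow>
        integrable lborel (\<lambda>z. indicator unit_square z * (w (fst z) (snd z) * f (TT \<phi> z))) \<and>
        (LINT z:unit_square|M1. f z) - (LINT z:unit_square|M2. f z)
          = (LINT z|lborel. indicator unit_square z * (w (fst z) (snd z) * f (TT \<phi> z))))"
proof -
  define W where "W z = w (fst z) (snd z)" for z :: "real \<times> real"
  have Wi: "integrable lborel (\<lambda>z. indicator unit_square z * W z)" using w_int[OF v] by (simp add: W_def)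
  have Wi': "integrable lborel (\<lambda>z. indicator unit_square z * (- W z))" using Wi by simp
  note Tm = TT_meas[OF flow]
  define M1 where "M1 = distr (density lborel (\<lambda>z. ennreal (indicator unit_square z * max 0 (W z)))) borel (TT \<phi>)"
  define M2 where "M2 = distr (density lborel (\<lambda>z. ennreal (indicator unit_square z * max 0 (- W z)))) borel (TT \<phi>)"
  note P1 = pos_meas[OF Wi Tm TT_in, folded M1_def]
  note P2 = pos_meas[OF Wi' Tm TT_in, folded M2_def]
  show ?thesis
  proof (intro exI conjI allI impI)
    show "finite_meas_on_square M1" by (rule P1(1))
    show "finite_meas_on_square M2" by (rule P2(1))
    fix f :: "real \<times> real \<Rightarrow> real" assume fc: "continuous_on unit_square f"
    have eq: "(\<lambda>z. indicator unit_square z * (w (fst z) (snd z) * f (TT \<phi> z))) =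
      (\<lambda>z. indicator unit_square z * max 0 (W z) * f (TT \<phi> z) - indicator unit_square z * max 0 (- W z) * f (TT \<phi> z))"
      by (auto simp: fun_eq_iff W_def max_def algebra_simps)
    have i1: "integrable lborel (\<lambda>z. indicator unit_square z * max 0 (W z) * f (TT \<phi> z))" using P1(2)[OF fc] by blast
    have i2: "integrable lborel (\<lambda>z. indicator unit_square z * max 0 (- W z) * f (TT \<phi> z))" using P2(2)[OF fc] by blast
    show "integrable lborel (\<lambda>z. indicator unit_square z * (w (fst z) (snd z) * f (TT \<phi> z)))"
      unfolding eq using i1 i2 by (rule Bochner_Integration.integrable_diff)
    show "(LINT z:unit_square|M1. f z) - (LINT z:unit_square|M2. f z)
          = (LINT z|lborel. indicator unit_square z * (w (fst z) (snd z) * f (TT \<phi> z)))"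
      unfolding eq using P1(2)[OF fc] P2(2)[OF fc] Bochner_Integration.integral_diff[OF i1 i2] by simp
  qed
qed

lemma main_identity:
  assumes v: "L2_H10 v w" and flow: "lagrangian_flow v \<phi>" and tf: "test_fun f"
  shows "(LINT z:unit_square|lborel. \<phi> (fst z) (snd z) * pt (px f) z)
       = (LINT z|lborel. indicator unit_square z * (w (fst z) (snd z) * f (TT \<phi> z)))"
proof -
  obtain fx fxt where
    d1: "\<And>z. ((\<lambda>y. f (fst z, y)) has_real_derivative fx z) (at (snd z))" and
    d2: "\<And>z. ((\<lambda>s. fx (s, snd z)) has_real_derivative fxt z) (at (fst z))" and
    cf: "continuous_on UNIV f" and cfx: "continuous_on UNIV fx" and cfxt: "continuous_on UNIV fxt" and
    supp: "\<And>z. z \<notin> {0<..<1} \<times> {0<..<1} \<Longrightarrow> f z = 0"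
    by (rule test_fun_facts[OF tf]) blast
  have pxf: "px f = fx" by (rule ext) (simp add: px_def DERIV_imp_deriv[OF d1])
  have ptpx: "pt (px f) z = fxt z" for z unfolding pxf pt_def using DERIV_imp_deriv[OF d2] by simp
  have fx01: "fx (t, x) = 0" if "t \<notin> {0<..<1}" for t x
  proof -
    have "(\<lambda>y. f (t, y)) = (\<lambda>y. 0)" using supp that by (auto simp: mem_Times_iff)
    then have "((\<lambda>y. f (t, y)) has_real_derivative 0) (at x)" by simp
    moreover have "((\<lambda>y. f (t, y)) has_real_derivative fx (t, x)) (at x)" using d1[of "(t,x)"] by simp
    ultimately show ?thesis using DERIV_unique by blast
  qed
  have f1: "f (t, 1) = 0" for t using supp by (auto simp: mem_Times_iff)
  have mfx[measurable]: "fx \<in> borel_measurable borel" "fxt \<in> borel_measurable borel" "f \<in> borel_measurable borel"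
    using cfx cfxt cf by (auto intro: borel_measurable_continuous_onI)
  obtain C1 where C1: "C1 > 0" "\<And>z. z \<in> unit_square \<Longrightarrow> \<bar>fxt z\<bar> \<le> C1"
    using cont_bound[OF continuous_on_subset[OF cfxt] D_compact] by blast
  obtain C2 where C2: "C2 > 0" "\<And>z. z \<in> unit_square \<Longrightarrow> \<bar>fx z\<bar> \<le> C2"
    using cont_bound[OF continuous_on_subset[OF cfx] D_compact] by blast
  have cfxt_t: "continuous_on {0..1} (\<lambda>t. fxt (t, x))" for x
    by (rule continuous_on_compose2[OF cfxt]) (auto intro!: continuous_intros)
  have cfx_x: "continuous_on {0..1} (\<lambda>x. fx (t, x))" for t
    by (rule continuous_on_compose2[OF cfx]) (auto intro!: continuous_intros)
  define F1 where "F1 z = indicator unit_square z * (\<phi> (fst z) (snd z) * fxt z)" for z :: "real \<times> real"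
  define G where "G z = indicator unit_square z * (v (fst z) (\<phi> (fst z) (snd z)) * fx z)" for z :: "real \<times> real"
  define H where "H z = indicator unit_square z * (w (fst z) (snd z) * f (TT \<phi> z))" for z :: "real \<times> real"
  have F1m: "F1 \<in> borel_measurable borel"
  proof -
    have "(\<lambda>z. (indicator unit_square z * \<phi> (fst z) (snd z)) * fxt z) \<in> borel_measurable borel"
      using phi_meas[OF flow_mono[OF flow] flow_cont[OF flow]] by simp
    then show ?thesis by (simp add: F1_def[abs_def] mult.assoc)
  qed
  have F1i: "integrable lborel F1"
  proof (rule Bochner_Integration.integrable_bound[OF D_int[of C1]])
    show "F1 \<in> borel_measurable lborel" using F1m by simp
    show "AE z in lborel. norm (F1 z) \<le> norm (indicator unit_square z * C1)"
    proof (rule AE_I2)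
      fix z :: "real \<times> real"
      show "norm (F1 z) \<le> norm (indicator unit_square z * C1)"
      proof (cases "z \<in> unit_square")
        case True
        then have "\<phi> (fst z) (snd z) \<in> {0..1}" by (intro flow_range[OF flow]) (auto simp: mem_Times_iff)
        then have "\<bar>\<phi> (fst z) (snd z)\<bar> * \<bar>fxt z\<bar> \<le> 1 * C1"
          by (intro mult_mono C1(2)[OF True]) auto
        then show ?thesis using True C1 by (simp add: F1_def abs_mult)
      qed (simp add: F1_def)
    qed
  qed
  have Gi: "integrable (lborel \<Otimes>\<^sub>M lborel) (\<lambda>(t,x). G (t,x))"
    using G_int[OF v flow mfx(1) C2(2)] by (simp add: G_def)
  obtain M1 M2 where MM: "\<forall>f. continuous_on unit_square f \<longrightarrow>
        integrable lborel (\<lambda>z. indicator unit_square z * (w (fst z) (snd z) * f (TT \<phi> z))) \<and>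
        (LINT z:unit_square|M1. f z) - (LINT z:unit_square|M2. f z)
          = (LINT z|lborel. indicator unit_square z * (w (fst z) (snd z) * f (TT \<phi> z)))"
    using measures_exist[OF v flow] by blast
  have Hi: "integrable lborel H" using MM continuous_on_subset[OF cf] unfolding H_def[abs_def] by blast
  have "(LINT z:unit_square|lborel. \<phi> (fst z) (snd z) * pt (px f) z) = (LINT z|lborel. F1 z)"
    unfolding set_lebesgue_integral_def ptpx F1_def by simp
  also have "\<dots> = (LINT x|lborel. LINT t|lborel. F1 (t, x))"
  proof -
    have "integrable (lborel \<Otimes>\<^sub>M lborel) (\<lambda>(t,x). F1 (t,x))" using F1i by (simp add: lborel_prod)
    then have "(LINT x|lborel. LINT t|lborel. F1 (t, x)) = integral\<^sup>L (lborel \<Otimes>\<^sub>M lborel) (\<lambda>(t,x). F1 (t,x))"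
      by (rule lborel_pair.integral_snd)
    then show ?thesis by (simp add: lborel_prod)
  qed
  also have "\<dots> = (LINT x|lborel. - (LINT t|lborel. G (t, x)))"
  proof (rule Bochner_Integration.integral_cong[OF refl])
    fix x :: real
    show "(LINT t|lborel. F1 (t, x)) = - (LINT t|lborel. G (t, x))"
    proof (cases "x \<in> {0..1}")
      case False
      then have "indicator unit_square (t, x) = (0::real)" for t by (simp add: indicator_def mem_Times_iff)
      then show ?thesis by (simp add: F1_def G_def)
    next
      case True
      have "(LINT t|lborel. F1 (t, x)) = (LINT t:{0..1}|lborel. \<phi> t x * fxt (t, x))"
        unfolding set_lebesgue_integral_def F1_def using True by (simp add: indicator_def mem_Times_iff)
      also have "\<dots> = - (LINT t:{0..1}|lborel. v t (\<phi> t x) * fx (t, x))"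
      proof (rule ibp01[OF flow_int[OF flow True]])
        show "\<And>t. t \<in> {0..1} \<Longrightarrow> \<phi> t x = \<phi> 0 x + (LINT r:{0..t}|lborel. v r (\<phi> r x))"
          using flow_eq[OF flow _ True] by blast
        show "\<And>t. t \<in> {0..1} \<Longrightarrow> ((\<lambda>t. fx (t, x)) has_real_derivative fxt (t, x)) (at t)"
          using d2 by (metis fst_conv snd_conv)
        show "continuous_on {0..1} (\<lambda>t. fxt (t, x))" by (rule cfxt_t)
        show "fx (0, x) = 0" by (rule fx01) simp
        show "fx (1, x) = 0" by (rule fx01) simp
      qed
      also have "(LINT t:{0..1}|lborel. v t (\<phi> t x) * fx (t, x)) = (LINT t|lborel. G (t, x))"
        unfolding set_lebesgue_integral_def G_def using True by (simp add: indicator_def mem_Times_iff)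
      finally show ?thesis .
    qed
  qed
  also have "\<dots> = - (LINT x|lborel. LINT t|lborel. G (t, x))" by simp
  also have "(LINT x|lborel. LINT t|lborel. G (t, x)) = (LINT t|lborel. LINT x|lborel. G (t, x))"
    using lborel_pair.Fubini_integral[of "\<lambda>t x. G (t,x)"] Gi by simp
  also have "\<dots> = (LINT t|lborel. - (LINT y|lborel. H (t, y)))"
  proof (rule integral_cong_AE)
    have Gm: "(\<lambda>(t,x). G (t,x)) \<in> borel_measurable (lborel \<Otimes>\<^sub>M lborel)"
      using borel_measurable_integrable[OF Gi] .
    have Hm: "(\<lambda>(t,x). H (t,x)) \<in> borel_measurable (lborel \<Otimes>\<^sub>M lborel)"
      using borel_measurable_integrable[OF Hi] by (simp add: lborel_prod)
    show "(\<lambda>t. LINT x|lborel. G (t, x)) \<in> borel_measurable lborel"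
      using lborel.borel_measurable_lebesgue_integral[OF Gm] by simp
    show "(\<lambda>t. - (LINT y|lborel. H (t, y))) \<in> borel_measurable lborel"
      using lborel.borel_measurable_lebesgue_integral[OF Hm] by simp
    show "AE t in lborel. (LINT x|lborel. G (t, x)) = - (LINT y|lborel. H (t, y))"
      using v_AE[OF v]
    proof eventually_elim
      case (elim t)
      show ?case
      proof (cases "t \<in> {0..1}")
        case False
        then have "indicator unit_square (t, x) = (0::real)" for x by (auto simp: indicator_def mem_Times_iff)
        then show ?thesis by (simp add: G_def H_def)
      next
        case True
        have "(LINT x|lborel. G (t, x)) = (LINT x:{0..1}|lborel. v t (\<phi> t x) * fx (t, x))"
          unfolding set_lebesgue_integral_def G_def using True by (simp add: indicator_def mem_Times_iff)
        also have "\<dots> = - (LINT y:{0..1}|lborel. w t y * f (t, gen_inv \<phi> t y))"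
        proof (rule inner_t)
          show "mono_on {0..1} (\<phi> t)" by (rule flow_mono[OF flow True])
          show "\<And>x. x \<in> {0..1} \<Longrightarrow> \<phi> t x \<in> {0..1}" by (rule flow_range[OF flow True])
          show "set_integrable lborel {0..1} (w t)" using elim True by blast
          show "\<And>x. x \<in> {0..1} \<Longrightarrow> v t x = (LINT s:{0..x}|lborel. w t s)" using elim True by blast
          show "\<And>x. x \<in> {0..1} \<Longrightarrow> ((\<lambda>y. f (t, y)) has_real_derivative fx (t, x)) (at x)"
            using d1 by (metis fst_conv snd_conv)
          show "continuous_on {0..1} (\<lambda>x. fx (t, x))" by (rule cfx_x)
          show "f (t, 1) = 0" by (rule f1)
        qed
        also have "(LINT y:{0..1}|lborel. w t y * f (t, gen_inv \<phi> t y)) = (LINT y|lborel. H (t, y))"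
          unfolding set_lebesgue_integral_def H_def
        proof (rule Bochner_Integration.integral_cong[OF refl])
          fix y
          show "indicator {0..1} y *\<^sub>R (w t y * f (t, gen_inv \<phi> t y)) =
              indicator unit_square (t, y) * (w (fst (t, y)) (snd (t, y)) * f (TT \<phi> (t, y)))"
            using True by (cases "y \<in> {0..1}") (simp_all add: TT_eq indicator_def mem_Times_iff)
        qed
        finally show ?thesis .
      qed
    qed
  qed
  also have "(LINT t|lborel. - (LINT y|lborel. H (t, y))) = - (LINT t|lborel. LINT y|lborel. H (t, y))"
    by simp
  also have "(LINT t|lborel. LINT y|lborel. H (t, y)) = (LINT z|lborel. H z)"
  proof -
    have "integrable (lborel \<Otimes>\<^sub>M lborel) (\<lambda>(t,y). H (t,y))" using Hi by (simp add: lborel_prod)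
    then have "(LINT t|lborel. LINT y|lborel. H (t, y)) = integral\<^sup>L (lborel \<Otimes>\<^sub>M lborel) (\<lambda>(t,y). H (t,y))"
      by (rule lborel_pair.integral_fst)
    then show ?thesis by (simp add: lborel_prod)
  qed
  finally show ?thesis by (simp add: H_def)
qed

lemma C2_cont: "C2_square f \<Longrightarrow> continuous_on unit_square f"
proof -
  assume "C2_square f"
  then obtain U where U: "unit_square \<subseteq> U" "Ck_on 2 U f" unfolding C2_square_def by blast
  have "Ck_on (Suc 1) U f" using U(2) by (simp only: Suc_1)
  then have "continuous_on U f" by (simp only: Ck_on.simps)
  then show ?thesis using U(1) by (rule continuous_on_subset)
qed

lemma test_cont: "test_fun f \<Longrightarrow> continuous_on unit_square f"
  using test_fun_facts continuous_on_subset by (metis top_greatest)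

lemma TT_fun_eq:
  fixes w :: "real \<Rightarrow> real \<Rightarrow> real" and f :: "real \<times> real \<Rightarrow> real"
  shows "(\<lambda>z. indicator unit_square z * (w (fst z) (snd z) * f (TT \<phi> z))) =
   (\<lambda>z. indicator unit_square z *\<^sub>R (w (fst z) (snd z) * f (fst z, gen_inv \<phi> (fst z) (snd z))))"
  by (rule ext) (auto simp: TT_eq indicator_def mem_Times_iff)

theorem mainTheorem8:
  fixes v w \<phi> :: "real \<Rightarrow> real \<Rightarrow> real"
  assumes v: "L2_H10 v w"
    and flow: "lagrangian_flow v \<phi>"
  shows "\<exists>M1 M2. finite_meas_on_square M1 \<and> finite_meas_on_square M2 \<and>
     (\<forall>f. test_fun f \<longrightarrow>
        (LINT z:unit_square|lborel. \<phi> (fst z) (snd z) * pt (px f) z)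
          = (LINT z:unit_square|M1. f z) - (LINT z:unit_square|M2. f z)) \<and>
     (\<forall>f. C2_square f \<longrightarrow>
        set_integrable lborel unit_square
          (\<lambda>z. w (fst z) (snd z) * f (fst z, gen_inv \<phi> (fst z) (snd z))) \<and>
        (LINT z:unit_square|lborel. w (fst z) (snd z) * f (fst z, gen_inv \<phi> (fst z) (snd z)))
          = (LINT z:unit_square|M1. f z) - (LINT z:unit_square|M2. f z))"
proof -
  obtain M1 M2 where M1: "finite_meas_on_square M1" and M2: "finite_meas_on_square M2" and
    MM: "\<forall>f. continuous_on unit_square f \<longrightarrow>
        integrable lborel (\<lambda>z. indicator unit_square z * (w (fst z) (snd z) * f (TT \<phi> z))) \<and>
        (LINT z:unit_square|M1. f z) - (LINT z:unit_square|M2. f z)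
          = (LINT z|lborel. indicator unit_square z * (w (fst z) (snd z) * f (TT \<phi> z)))"
    using measures_exist[OF v flow] by blast
  show ?thesis
  proof (intro exI conjI allI impI)
    show "finite_meas_on_square M1" by (rule M1)
    show "finite_meas_on_square M2" by (rule M2)
    fix f :: "real \<times> real \<Rightarrow> real"
    {
      assume tf: "test_fun f"
      show "(LINT z:unit_square|lborel. \<phi> (fst z) (snd z) * pt (px f) z)
          = (LINT z:unit_square|M1. f z) - (LINT z:unit_square|M2. f z)"
        using main_identity[OF v flow tf] MM test_cont[OF tf] by simp
    }
    {
      assume cf: "C2_square f"
      have I: "integrable lborel (\<lambda>z. indicator unit_square z * (w (fst z) (snd z) * f (TT \<phi> z))) \<and>
        (LINT z:unit_square|M1. f z) - (LINT z:unit_square|M2. f z)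
          = (LINT z|lborel. indicator unit_square z * (w (fst z) (snd z) * f (TT \<phi> z)))"
        using MM C2_cont[OF cf] by blast
      show "set_integrable lborel unit_square
          (\<lambda>z. w (fst z) (snd z) * f (fst z, gen_inv \<phi> (fst z) (snd z)))"
        using I unfolding set_integrable_def TT_fun_eq by blast
      show "(LINT z:unit_square|lborel. w (fst z) (snd z) * f (fst z, gen_inv \<phi> (fst z) (snd z)))
          = (LINT z:unit_square|M1. f z) - (LINT z:unit_square|M2. f z)"
        using I unfolding set_lebesgue_integral_def TT_fun_eq by simp
    }
  qed
qed

end
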